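(* Let $G=D\times L$ be a locally compact second countable group, with $D$ discrete, and identify $L$ with $\{1\}\times L$. Then the map $\mathcal{C}(G)\to\mathcal{C}(L)$, $H\mapsto H\cap L$, is continuous.
   Context: For a locally compact group $G$, $\mathcal{C}(G)$ is the set of closed subgroups of $G$ with the Chabauty topology, generated by the sets $\{H:H\cap K=\emptyset\}$ ($K\subset G$ compact) and $\{H:H\cap U\neq\emptyset\}$ ($U\subset G$ open). *)

theory Defs
  imports "HOL-Analysis.Analysis" "HOL-Library.Product_Plus"
begin

text \<open>Groups are written additively via the (not necessarily commutative) class group_add.\<close>

definition closed_subgroup :: "'a::{topological_space, group_add} set \<Rightarrow> bool" where
  "closed_subgroup H \<longleftrightarrow> closed H \<and> 0 \<in> H \<and> (\<forall>x\<in>H. \<forall>y\<in>H. x + y \<in> H) \<and> (\<forall>x\<in>H. - x \<in> H)"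

definition chabauty :: "'a::{topological_space, group_add} set topology" where
  "chabauty = subtopology
     (topology_generated_by
        ({{H. H \<inter> K = {}} | K. compact K} \<union> {{H. H \<inter> U \<noteq> {}} | U. open U}))
     {H. closed_subgroup H}"

end

theory Submission
  imports Defs
begin

theorem lemma3:
  assumes "locally_compact_space (euclidean :: ('d::{discrete_topology, topological_group_add, second_countable_topology} \<times> 'l::{topological_group_add, t2_space, second_countable_topology}) topology)"
  shows "continuous_map (chabauty :: ('d \<times> 'l) set topology) (chabauty :: 'l set topology)
           (\<lambda>H. {l. (0, l) \<in> H})"
proof -
  define SG :: "('d \<times> 'l) set set set" where
    "SG = {{H. H \<inter> K = {}} | K. compact K} \<union> {{H. H \<inter> U \<noteq> {}} | U. open U}"
  define SL :: "'l set set set" where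
    "SL = {{H. H \<inter> K = {}} | K. compact K} \<union> {{H. H \<inter> U \<noteq> {}} | U. open U}"
  define f :: "('d \<times> 'l) set \<Rightarrow> 'l set" where "f = (\<lambda>H. {l. (0, l) \<in> H})"
  have UG: "UNIV \<in> SG" unfolding SG_def by (rule UnI1, rule CollectI, rule exI[of _ "{}"]) auto
  have UL: "UNIV \<in> SL" unfolding SL_def by (rule UnI1, rule CollectI, rule exI[of _ "{}"]) auto
  have topG: "topspace (topology_generated_by SG) = UNIV" using UG by auto
  have topL: "topspace (topology_generated_by SL) = UNIV" using UL by auto
  let ?X = "subtopology (topology_generated_by SG) {H. closed_subgroup H}"
  have tX: "topspace ?X = {H. closed_subgroup H}" using topG by simp
  have cont: "continuous_map ?X (topology_generated_by SL) f"
  proof (rule continuous_on_generated_topo)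
    show "f ` topspace ?X \<subseteq> \<Union> SL" using UL by auto
  next
    fix U assume "U \<in> SL"
    then obtain V where V: "V \<in> SG" and eq: "f -` U = V"
    proof (unfold SL_def, elim UnE CollectE exE conjE)
      fix K :: "'l set" assume U: "U = {H. H \<inter> K = {}}" and K: "compact K"
      assume r: "\<And>V. V \<in> SG \<Longrightarrow> f -` U = V \<Longrightarrow> thesis"
      have "compact (Pair 0 ` K :: ('d \<times> 'l) set)"
        by (intro compact_continuous_image K continuous_intros)
      moreover have "f -` U = {H. H \<inter> Pair 0 ` K = {}}" unfolding U f_def by auto
      ultimately show thesis by (intro r) (auto simp: SG_def)
    next
      fix W :: "'l set" assume U: "U = {H. H \<inter> W \<noteq> {}}" and W: "open W"
      assume r: "\<And>V. V \<in> SG \<Longrightarrow> f -` U = V \<Longrightarrow> thesis"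
      have "open ({0::'d} \<times> W)" using W by (intro open_Times) (auto simp: open_discrete)
      moreover have "f -` U = {H. H \<inter> ({0} \<times> W) \<noteq> {}}" unfolding U f_def by auto
      ultimately show thesis by (intro r) (auto simp: SG_def)
    qed
    have "openin (topology_generated_by SG) V" using V by (rule topology_generated_by_Basis)
    then show "openin ?X (f -` U \<inter> topspace ?X)"
      unfolding eq tX by (simp add: openin_subtopology_Int)
  qed
  have "f \<in> topspace ?X \<rightarrow> {H. closed_subgroup H}"
  proof
    fix H assume "H \<in> topspace ?X"
    then have H: "closed_subgroup H" using tX by auto
    have "closed (Pair 0 -` H :: 'l set)"
      using H unfolding closed_subgroup_def
      by (intro continuous_closed_vimage) (auto intro!: continuous_intros)
    moreover have "f H = Pair 0 -` H" unfolding f_def by auto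
    moreover have "\<forall>x\<in>Pair 0 -` H. \<forall>y\<in>Pair 0 -` H. x + y \<in> Pair 0 -` H"
      proof (intro ballI)
      fix x y assume "x \<in> Pair 0 -` H" "y \<in> Pair 0 -` H"
      then have "(0, x) + (0, y) \<in> H" using H unfolding closed_subgroup_def by blast
      then show "x + y \<in> Pair 0 -` H" by simp
    qed
    moreover have "\<forall>x\<in>Pair 0 -` H. - x \<in> Pair 0 -` H"
      proof (intro ballI)
      fix x assume "x \<in> Pair 0 -` H"
      then have "- (0, x) \<in> H" using H unfolding closed_subgroup_def by blast
      then show "- x \<in> Pair 0 -` H" by simp
    qed
    moreover have "0 \<in> Pair (0::'d) -` H"
      using H unfolding closed_subgroup_def by (simp add: zero_prod_def)
    ultimately show "f H \<in> {H. closed_subgroup H}"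
      unfolding closed_subgroup_def by simp
  qed
  then have "continuous_map ?X (subtopology (topology_generated_by SL) {H. closed_subgroup H}) f"
    using cont by (rule continuous_map_into_subtopology[rotated])
  then show ?thesis unfolding chabauty_def SG_def SL_def f_def .
qed

end
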